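(* Let $L$ be a factorial R-lattice of type I admitting a regular equivalence relation $\sim$. Then every element of $L$ is the supremum of a family of mutually orthogonal minimal elements.
   Context: Orthocomplemented lattice (paper's convention): a set $L$ with a partial order $\le$ in which every subset has a supremum and an infimum ($l\vee l'$, $l\wedge l'$ denote binary sup/inf, $0=\inf L$, $1=\sup L$), such that: (continuity) for every increasing net $(l_i)$ and every $l$, $\bigvee_i(l\wedge l_i)=l\wedge\bigvee_i l_i$, and for every decreasing net $(l_i)$ and every $l$, $\bigwedge_i(l\vee l_i)=l\vee\bigwedge_i l_i$; (modularity) $l\le l''$ implies $(l\vee l')\wedge l''=l\vee(l'\wedge l'')$ for all $l'$; together with a map $l\mapsto l^\perp$, also written $1-l$, satisfying $l^{\perp\perp}=l$, $l\vee l^\perp=1$, $l\wedge l^\perp=0$, and $l\le l'\Rightarrow l'^\perp\le l^\perp$. For $l'\le l$ put $l-l'=(1-l')\wedge l$. Write $\perp(l)=\{l'\in L: l'\le 1-l\}$; elements of $\perp(l)$ are orthogonal to $l$; a family is mutually orthogonal if any two distinct members are orthogonal. $l$ commutes with $l'$ if $l=(l\wedge l')\vee(l\wedge l'^\perp)$; $c(l)$ is the set of elements commuting with $l$; $C(L)=\bigcap_{l\in L}c(l)$. $L$ is factorial if $C(L)=\{0,1\}$ and abelian if $C(L)=L$. For $l\in L$, $L\wedge l=\{l'\in L:l'\le l\}$ is an orthocomplemented lattice with complement $l'\mapsto l-l'$; $l$ is an abelian element if $L\wedge l$ is abelian. A factorial lattice is of type I if it has at least one nonzero abelian element. $L$ is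 an R-lattice if $C(L\wedge l)=\{c\wedge l: c\in C(L)\}$ for every $l\in L$. An element $l\ne 0$ is minimal if for every $l'\in L$ either $l\wedge l'=0$ or $l\wedge l'=l$; $Min(L)$ is the set of minimal elements and $Min(l)=\{m\in Min(L): m\le l\}$. The supremum of the empty family is $0$. Regular equivalence relation: for an equivalence relation $\sim$ on $L$ write $l\le_\sim l'$ if there is $l''\le l'$ with $l\sim l''$. $\sim$ is regular if: (1) $l\sim 0\iff l=0$; (2) $l\ge l'$ and $l\le_\sim l'$ imply $l\sim l'$; (3) for all $l,l'$, $l\le_\sim l'$ or $l'\le_\sim l$; (4) if $(l_i)$, $(l_i')$ are families of mutually orthogonal elements with $l_i\sim l_i'$ for all $i$, then $\bigvee_i l_i\sim\bigvee_i l_i'$; (5) $l'\le l$ and $l'\sim l$ imply $l'=l$. *)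

theory Defs
  imports Main
begin

unbundle lattice_syntax

text \<open>An orthocomplemented lattice in the paper's sense: the complete lattice structure is
the type class complete_lattice (0 = bot, 1 = top), and perp is the orthocomplement.\<close>

definition up_directed :: "'a::order set \<Rightarrow> bool" where
  "up_directed D \<longleftrightarrow> (\<forall>x\<in>D. \<forall>y\<in>D. \<exists>z\<in>D. x \<le> z \<and> y \<le> z)"

definition down_directed :: "'a::order set \<Rightarrow> bool" where
  "down_directed D \<longleftrightarrow> (\<forall>x\<in>D. \<forall>y\<in>D. \<exists>z\<in>D. z \<le> x \<and> z \<le> y)"

definition ortho_lattice :: "('a::complete_lattice \<Rightarrow> 'a) \<Rightarrow> bool" where
  "ortho_lattice perp \<longleftrightarrow>
     (\<forall>(D::'a set) l. up_directed D \<longrightarrow> (SUP d\<in>D. l \<sqinter> d) = l \<sqinter> Sup D) \<and>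
     (\<forall>(D::'a set) l. down_directed D \<longrightarrow> (INF d\<in>D. l \<squnion> d) = l \<squnion> Inf D) \<and>
     (\<forall>x y (z::'a). x \<le> z \<longrightarrow> (x \<squnion> y) \<sqinter> z = x \<squnion> (y \<sqinter> z)) \<and>
     (\<forall>l. perp (perp l) = l) \<and>
     (\<forall>l. l \<squnion> perp l = top) \<and>
     (\<forall>l. l \<sqinter> perp l = bot) \<and>
     (\<forall>l l'. l \<le> l' \<longrightarrow> perp l' \<le> perp l)"

definition commutes :: "('a::lattice \<Rightarrow> 'a) \<Rightarrow> 'a \<Rightarrow> 'a \<Rightarrow> bool" where
  "commutes c x y \<longleftrightarrow> x = (x \<sqinter> y) \<squnion> (x \<sqinter> c y)"

definition centre :: "'a::lattice set \<Rightarrow> ('a \<Rightarrow> 'a) \<Rightarrow> 'a set" where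
  "centre S c = {x\<in>S. \<forall>y\<in>S. commutes c x y}"

text \<open>the lattice L \<and> l: carrier and relative complement l' \<mapsto> l - l'\<close>
definition below :: "'a::order \<Rightarrow> 'a set" where
  "below l = {x. x \<le> l}"

definition rel_compl :: "('a::lattice \<Rightarrow> 'a) \<Rightarrow> 'a \<Rightarrow> 'a \<Rightarrow> 'a" where
  "rel_compl perp l x = perp x \<sqinter> l"

definition C_L :: "('a::lattice \<Rightarrow> 'a) \<Rightarrow> 'a set" where
  "C_L perp = centre UNIV perp"

definition C_sub :: "('a::lattice \<Rightarrow> 'a) \<Rightarrow> 'a \<Rightarrow> 'a set" where
  "C_sub perp l = centre (below l) (rel_compl perp l)"

definition factorial :: "('a::complete_lattice \<Rightarrow> 'a) \<Rightarrow> bool" where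
  "factorial perp \<longleftrightarrow> C_L perp = {bot, top}"

definition abelian_elem :: "('a::complete_lattice \<Rightarrow> 'a) \<Rightarrow> 'a \<Rightarrow> bool" where
  "abelian_elem perp l \<longleftrightarrow> C_sub perp l = below l"

definition type_I :: "('a::complete_lattice \<Rightarrow> 'a) \<Rightarrow> bool" where
  "type_I perp \<longleftrightarrow> factorial perp \<and> (\<exists>l. l \<noteq> bot \<and> abelian_elem perp l)"

definition R_lattice :: "('a::complete_lattice \<Rightarrow> 'a) \<Rightarrow> bool" where
  "R_lattice perp \<longleftrightarrow> (\<forall>l. C_sub perp l = {c \<sqinter> l | c. c \<in> C_L perp})"

definition minimal :: "'a::complete_lattice \<Rightarrow> bool" where
  "minimal l \<longleftrightarrow> l \<noteq> bot \<and> (\<forall>l'. l \<sqinter> l' = bot \<or> l \<sqinter> l' = l)"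

definition orthogonal :: "('a \<Rightarrow> 'a) \<Rightarrow> 'a::order \<Rightarrow> 'a \<Rightarrow> bool" where
  "orthogonal perp x y \<longleftrightarrow> x \<le> perp y"

definition sim_le :: "('a \<Rightarrow> 'a \<Rightarrow> bool) \<Rightarrow> 'a::order \<Rightarrow> 'a \<Rightarrow> bool" where
  "sim_le R l l' \<longleftrightarrow> (\<exists>l''. l'' \<le> l' \<and> R l l'')"

text \<open>Regular equivalence relation. Families in (4) are indexed by subsets of the lattice
itself; this loses no generality.\<close>
definition regular_equiv :: "('a::complete_lattice \<Rightarrow> 'a) \<Rightarrow> ('a \<Rightarrow> 'a \<Rightarrow> bool) \<Rightarrow> bool" where
  "regular_equiv perp R \<longleftrightarrow>
     equivp R \<and>
     (\<forall>l. R l bot \<longleftrightarrow> l = bot) \<and>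
     (\<forall>l l'. l' \<le> l \<and> sim_le R l l' \<longrightarrow> R l l') \<and>
     (\<forall>l l'. sim_le R l l' \<or> sim_le R l' l) \<and>
     (\<forall>(I::'a set) f g.
        (\<forall>i\<in>I. \<forall>j\<in>I. i \<noteq> j \<longrightarrow> orthogonal perp (f i) (f j)) \<longrightarrow>
        (\<forall>i\<in>I. \<forall>j\<in>I. i \<noteq> j \<longrightarrow> orthogonal perp (g i) (g j)) \<longrightarrow>
        (\<forall>i\<in>I. R (f i) (g i)) \<longrightarrow>
        R (SUP i\<in>I. f i) (SUP i\<in>I. g i)) \<and>
     (\<forall>l l'. l' \<le> l \<and> R l' l \<longrightarrow> l' = l)"

end

theory Submission
  imports Defs
begin

lemma atom_below:
  fixes perp :: "'a::complete_lattice \<Rightarrow> 'a" and R :: "'a \<Rightarrow> 'a \<Rightarrow> bool" and l :: 'a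
  assumes "factorial perp" and "R_lattice perp" and "type_I perp" and "regular_equiv perp R"
    and "l \<noteq> bot"
  shows "\<exists>m. minimal m \<and> m \<le> l"
proof -
  obtain a where a0: "a \<noteq> bot" and ab: "abelian_elem perp a" using assms(3) unfolding type_I_def by blast
  have "below a = C_sub perp a" using ab unfolding abelian_elem_def by simp
  also have "\<dots> = {c \<sqinter> a | c. c \<in> C_L perp}" using assms(2) unfolding R_lattice_def by blast
  also have "\<dots> = {c \<sqinter> a | c. c \<in> {bot, top}}" using assms(1) unfolding factorial_def by simp
  also have "\<dots> = {bot, a}"
  proof (rule set_eqI, rule iffI)
    fix x assume "x \<in> {c \<sqinter> a | c. c \<in> {bot, top}}" then show "x \<in> {bot, a}" by auto
  next
    fix x assume "x \<in> {bot, a}"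
    then have "x = bot \<sqinter> a \<or> x = top \<sqinter> a" by auto
    then show "x \<in> {c \<sqinter> a | c. c \<in> {bot, top}}" by blast
  qed
  finally have ba: "\<And>x. x \<le> a \<Longrightarrow> x = bot \<or> x = a" unfolding below_def by blast
  note rd = assms(4)[unfolded regular_equiv_def]
  have eq: "equivp R" using rd by (rule conjunct1)
  have z: "\<And>l. R l bot \<longleftrightarrow> l = bot" using rd[THEN conjunct2, THEN conjunct1] by blast
  have tot: "\<And>l l'. sim_le R l l' \<or> sim_le R l' l"
    using rd[THEN conjunct2, THEN conjunct2, THEN conjunct2, THEN conjunct1] by blast
  have r5: "\<And>l l'. l' \<le> l \<Longrightarrow> R l' l \<Longrightarrow> l' = l"
    using rd[THEN conjunct2, THEN conjunct2, THEN conjunct2, THEN conjunct2, THEN conjunct2] by blast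
  have sym: "\<And>x y. R x y \<Longrightarrow> R y x" using eq by (meson equivp_symp)
  have tr: "\<And>x y w. R x y \<Longrightarrow> R y w \<Longrightarrow> R x w" using eq by (meson equivp_transp)
  have key: "\<And>x. x \<noteq> bot \<Longrightarrow> \<exists>y\<le>x. R a y"
  proof -
    fix x :: 'a assume xn: "x \<noteq> bot"
    show "\<exists>y\<le>x. R a y"
    proof (cases "sim_le R a x")
      case True then show ?thesis unfolding sim_le_def by blast
    next
      case False
      then have "sim_le R x a" using tot by blast
      then obtain y where "y \<le> a" "R x y" unfolding sim_le_def by blast
      then have "y = a" using ba z xn by blast
      with \<open>R x y\<close> show ?thesis using sym by blast
    qed
  qed
  obtain m where ml: "m \<le> l" and am: "R a m" using key[OF assms(5)] by blast
  have mn: "m \<noteq> bot" using am z a0 by blast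
  have atom: "\<And>x. x \<le> m \<Longrightarrow> x \<noteq> bot \<Longrightarrow> x = m"
  proof -
    fix x assume xm: "x \<le> m" and xn: "x \<noteq> bot"
    show "x = m"
    proof (cases "sim_le R x a")
      case True
      then obtain y where "y \<le> a" "R x y" unfolding sim_le_def by blast
      then have "y = a" using ba z xn by blast
      then have "R x m" using \<open>R x y\<close> am tr by blast
      then show ?thesis using r5 xm by blast
    next
      case False
      then have "sim_le R a x" using tot by blast
      then obtain y where "y \<le> x" "R a y" unfolding sim_le_def by blast
      then have "R y m" using am sym tr by blast
      then have "y = m" using r5 \<open>y \<le> x\<close> xm by (meson order.trans)
      then show ?thesis using \<open>y \<le> x\<close> xm by simp
    qed
  qed
  have "minimal m" unfolding minimal_def using mn atom by (metis inf_le1)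
  then show ?thesis using ml by blast
qed

theorem mainTheorem8:
  fixes perp :: "'a::complete_lattice \<Rightarrow> 'a" and R :: "'a \<Rightarrow> 'a \<Rightarrow> bool"
  assumes "ortho_lattice perp"
    and "factorial perp"
    and "R_lattice perp"
    and "type_I perp"
    and "regular_equiv perp R"
  shows "\<forall>l. \<exists>M. (\<forall>m\<in>M. minimal m) \<and>
              (\<forall>x\<in>M. \<forall>y\<in>M. x \<noteq> y \<longrightarrow> orthogonal perp x y) \<and>
              Sup M = l"
proof
  fix l :: 'a
  note od = assms(1)[unfolded ortho_lattice_def]
  have modu: "\<And>x y (z::'a). x \<le> z \<Longrightarrow> (x \<squnion> y) \<sqinter> z = x \<squnion> (y \<sqinter> z)"
    using od[THEN conjunct2, THEN conjunct2, THEN conjunct1] by blast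
  have inv: "\<And>x. perp (perp x) = x"
    using od[THEN conjunct2, THEN conjunct2, THEN conjunct2, THEN conjunct1] by blast
  have jt: "\<And>x. x \<squnion> perp x = top"
    using od[THEN conjunct2, THEN conjunct2, THEN conjunct2, THEN conjunct2, THEN conjunct1] by blast
  have mb: "\<And>x. x \<sqinter> perp x = bot"
    using od[THEN conjunct2, THEN conjunct2, THEN conjunct2, THEN conjunct2, THEN conjunct2, THEN conjunct1] by blast
  have anti: "\<And>x y. x \<le> y \<Longrightarrow> perp y \<le> perp x"
    using od[THEN conjunct2, THEN conjunct2, THEN conjunct2, THEN conjunct2, THEN conjunct2, THEN conjunct2] by blast
  have osym: "\<And>x y. orthogonal perp x y \<Longrightarrow> orthogonal perp y x"
    unfolding orthogonal_def by (metis anti inv)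
  define A where "A = {M. (\<forall>m\<in>M. minimal m \<and> m \<le> l) \<and> (\<forall>x\<in>M. \<forall>y\<in>M. x \<noteq> y \<longrightarrow> orthogonal perp x y)}"
  have ch: "\<forall>C\<in>chains A. \<Union>C \<in> A"
  proof
    fix C assume C: "C \<in> chains A"
    have sub: "C \<subseteq> A" using chainsD2[OF C] .
    show "\<Union>C \<in> A" unfolding A_def
    proof (intro CollectI conjI ballI impI)
      fix m assume "m \<in> \<Union>C" then show "minimal m" "m \<le> l" using sub unfolding A_def by blast+
    next
      fix x y assume "x \<in> \<Union>C" "y \<in> \<Union>C" "x \<noteq> y"
      then obtain X Y where "X \<in> C" "Y \<in> C" "x \<in> X" "y \<in> Y" by blast
      then have "X \<subseteq> Y \<or> Y \<subseteq> X" using chainsD[OF C] by blast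
      then show "orthogonal perp x y" using sub \<open>X \<in> C\<close> \<open>Y \<in> C\<close> \<open>x \<in> X\<close> \<open>y \<in> Y\<close> \<open>x \<noteq> y\<close>
        unfolding A_def by blast
    qed
  qed
  then obtain M where MA: "M \<in> A" and mx0: "\<forall>X\<in>A. M \<subseteq> X \<longrightarrow> X = M"
    using Zorn_Lemma[OF ch] by (elim bexE) 
  have mx: "\<And>X. X \<in> A \<Longrightarrow> M \<subseteq> X \<Longrightarrow> X = M" using mx0 by blast
  define s where "s = Sup M"
  have sl: "s \<le> l" using MA unfolding A_def s_def by (auto intro: Sup_least)
  have d0: "perp s \<sqinter> l = bot"
  proof (rule ccontr)
    assume "perp s \<sqinter> l \<noteq> bot"
    then obtain m where mm: "minimal m" and md: "m \<le> perp s \<sqinter> l"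
      using atom_below[OF assms(2-5)] by blast
    have mps: "m \<le> perp s" and ml: "m \<le> l" using md by auto
    have orth: "\<And>x. x \<in> M \<Longrightarrow> orthogonal perp m x"
    proof -
      fix x assume "x \<in> M"
      then have "x \<le> s" unfolding s_def by (simp add: Sup_upper)
      then have "perp s \<le> perp x" by (rule anti)
      then show "orthogonal perp m x" unfolding orthogonal_def using mps by simp
    qed
    have "m \<notin> M"
    proof
      assume "m \<in> M"
      then have "m \<le> s" unfolding s_def by (simp add: Sup_upper)
      then have "m \<le> s \<sqinter> perp s" using mps by simp
      then have "m = bot" using mb by (simp add: bot_unique)
      then show False using mm unfolding minimal_def by simp
    qed
    have "insert m M \<in> A" using MA mm ml orth osym unfolding A_def by auto
    then have "insert m M = M" using mx by blast
    then show False using \<open>m \<notin> M\<close> by blast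
  qed
  have "l = (s \<squnion> perp s) \<sqinter> l" using jt by simp
  also have "\<dots> = s \<squnion> (perp s \<sqinter> l)" using modu[OF sl] .
  also have "\<dots> = s" using d0 by simp
  finally have "Sup M = l" unfolding s_def by simp
  then show "\<exists>M. (\<forall>m\<in>M. minimal m) \<and>
              (\<forall>x\<in>M. \<forall>y\<in>M. x \<noteq> y \<longrightarrow> orthogonal perp x y) \<and> Sup M = l"
    using MA unfolding A_def by blast
qed

end
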